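(* Let $G=(V,E)$ be a connected graph on $n\geq 4$ vertices with $V=\{p_1,\ldots,p_{n-1},q\}$, where $p_1-p_2-\cdots-p_{n-1}$ is a path in $G$, and let $N(q)=\{p_{i_1},\ldots,p_{i_t}\}$. If $\psi_{n-1}(G)=2$ and $\psi_n(G)=0$, then: (1) $d(p_1)\geq 2$ and $d(p_{n-1})\geq 2$; (2) $p_1p_{n-1}\notin E$, $qp_1\notin E$, $qp_{n-1}\notin E$, and for all $i\in\{2,\ldots,n-2\}$, if $qp_i\in E$ then $qp_{i+1}\notin E$; (3) $p_1p_{i_j+1}\notin E$ and $p_{n-1}p_{i_j-1}\notin E$ for all $j\in\{1,\ldots,t\}$; (4) $p_1p_{i_j-1}\notin E$ for all $j$ with $i_j>\min\{i_1,\ldots,i_t\}$, and $p_{n-1}p_{i_j+1}\notin E$ for all $j$ with $i_j<\max\{i_1,\ldots,i_t\}$.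
   Context: All graphs are finite and simple. For a graph $G$ and a positive integer $k$, a $k$-path vertex cover ($k$-PVC) of $G$ is a set $S$ of vertices such that every path on $k$ vertices in $G$ contains at least one vertex of $S$ (if $G$ has no path on $k$ vertices, the empty set is a $k$-PVC). $\psi_k(G)$ denotes the minimum cardinality of a $k$-PVC of $G$. $N(v)$ is the neighbourhood and $d(v)$ the degree of a vertex $v$. *)

theory Defs
  imports Main
begin

definition simple_graph :: "'a set \<Rightarrow> ('a \<Rightarrow> 'a \<Rightarrow> bool) \<Rightarrow> bool" where
  "simple_graph V E \<longleftrightarrow> finite V \<and>
     (\<forall>x y. E x y \<longrightarrow> x \<in> V \<and> y \<in> V \<and> x \<noteq> y \<and> E y x)"

definition connected_graph :: "'a set \<Rightarrow> ('a \<Rightarrow> 'a \<Rightarrow> bool) \<Rightarrow> bool" where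
  "connected_graph V E \<longleftrightarrow>
     (\<forall>u\<in>V. \<forall>v\<in>V. (\<lambda>x y. E x y \<and> x \<in> V \<and> y \<in> V)\<^sup>*\<^sup>* u v)"

definition is_path :: "'a set \<Rightarrow> ('a \<Rightarrow> 'a \<Rightarrow> bool) \<Rightarrow> nat \<Rightarrow> 'a list \<Rightarrow> bool" where
  "is_path V E k xs \<longleftrightarrow> length xs = k \<and> distinct xs \<and> set xs \<subseteq> V \<and>
     (\<forall>i. Suc i < length xs \<longrightarrow> E (xs ! i) (xs ! Suc i))"

definition is_kpvc :: "'a set \<Rightarrow> ('a \<Rightarrow> 'a \<Rightarrow> bool) \<Rightarrow> nat \<Rightarrow> 'a set \<Rightarrow> bool" where
  "is_kpvc V E k S \<longleftrightarrow> S \<subseteq> V \<and> (\<forall>xs. is_path V E k xs \<longrightarrow> set xs \<inter> S \<noteq> {})"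

definition psi :: "'a set \<Rightarrow> ('a \<Rightarrow> 'a \<Rightarrow> bool) \<Rightarrow> nat \<Rightarrow> nat" where
  "psi V E k = Min (card ` {S. is_kpvc V E k S})"

definition degree :: "'a set \<Rightarrow> ('a \<Rightarrow> 'a \<Rightarrow> bool) \<Rightarrow> 'a \<Rightarrow> nat" where
  "degree V E v = card {u \<in> V. E v u}"

end

theory Submission imports Defs begin

fun chain :: "('a \<Rightarrow> 'a \<Rightarrow> bool) \<Rightarrow> 'a list \<Rightarrow> bool" where
  "chain E [] = True"
| "chain E [x] = True"
| "chain E (x # y # zs) = (E x y \<and> chain E (y # zs))"

lemma chain_Cons: "chain E (x # xs) \<longleftrightarrow> chain E xs \<and> (xs \<noteq> [] \<longrightarrow> E x (hd xs))"
  by (cases xs) auto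

lemma chain_nth: "chain E xs \<longleftrightarrow> (\<forall>i. Suc i < length xs \<longrightarrow> E (xs ! i) (xs ! Suc i))"
proof (induction E xs rule: chain.induct)
  case (3 E x y zs)
  show ?case
  proof
    assume "chain E (x # y # zs)"
    then show "\<forall>i. Suc i < length (x # y # zs) \<longrightarrow> E ((x # y # zs) ! i) ((x # y # zs) ! Suc i)"
      using 3 by (auto simp: nth_Cons split: nat.split)
  next
    assume h: "\<forall>i. Suc i < length (x # y # zs) \<longrightarrow> E ((x # y # zs) ! i) ((x # y # zs) ! Suc i)"
    have "E x y" using h[rule_format, of 0] by simp
    moreover have "\<forall>i. Suc i < length (y # zs) \<longrightarrow> E ((y # zs) ! i) ((y # zs) ! Suc i)"
      using h by (metis Suc_less_eq length_Cons nth_Cons_Suc)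
    ultimately show "chain E (x # y # zs)" using 3 by simp
  qed
qed auto

lemma chain_append: "chain E (xs @ ys) \<longleftrightarrow> chain E xs \<and> chain E ys \<and> (xs \<noteq> [] \<longrightarrow> ys \<noteq> [] \<longrightarrow> E (last xs) (hd ys))"
  by (induction xs) (auto simp: chain_Cons)

lemma chain_rev: "(\<And>x y. E x y \<Longrightarrow> E y x) \<Longrightarrow> chain E (rev xs) = chain E xs"
  by (induction xs) (auto simp: chain_append chain_Cons hd_rev last_rev)

lemma chain_upt: "(\<And>i. a \<le> i \<Longrightarrow> Suc i < b \<Longrightarrow> E (p i) (p (Suc i))) \<Longrightarrow> chain E (map p [a..<b])"
  unfolding chain_nth by auto

lemma hd_map_upt[simp]: "a < b \<Longrightarrow> hd (map p [a..<b]) = p a"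
  by (simp add: hd_map)

lemma last_map_upt[simp]: "a < b \<Longrightarrow> last (map p [a..<b]) = p (b - 1)"
  by (simp add: last_map)

theorem mainTheorem11:
  fixes V :: "'a set" and E :: "'a \<Rightarrow> 'a \<Rightarrow> bool" and p :: "nat \<Rightarrow> 'a" and q :: 'a
    and n :: nat
  assumes "simple_graph V E" and "connected_graph V E" and "n \<ge> 4"
    and "V = p ` {1..n-1} \<union> {q}" and "card V = n"
    and "\<forall>i. 1 \<le> i \<and> i < n - 1 \<longrightarrow> E (p i) (p (i+1))"
    and "psi V E (n-1) = 2" and "psi V E n = 0"
  shows "(degree V E (p 1) \<ge> 2 \<and> degree V E (p (n-1)) \<ge> 2) \<and>
    (\<not> E (p 1) (p (n-1)) \<and> \<not> E q (p 1) \<and> \<not> E q (p (n-1)) \<and>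
         (\<forall>i\<in>{2..n-2}. E q (p i) \<longrightarrow> \<not> E q (p (i+1)))) \<and>
    (\<forall>i\<in>{1..n-1}. E q (p i) \<longrightarrow> \<not> E (p 1) (p (i+1)) \<and> \<not> E (p (n-1)) (p (i-1))) \<and>
    ((\<forall>i\<in>{1..n-1}. E q (p i) \<and> i > Min {j\<in>{1..n-1}. E q (p j)}
            \<longrightarrow> \<not> E (p 1) (p (i-1))) \<and>
         (\<forall>i\<in>{1..n-1}. E q (p i) \<and> i < Max {j\<in>{1..n-1}. E q (p j)}
            \<longrightarrow> \<not> E (p (n-1)) (p (i+1))))"
proof -
  obtain m where nm: "n = Suc m" using assms(3) by (cases n) auto
  have m3: "m \<ge> 3" using assms(3) nm by simp
  have V: "V = p ` {1..m} \<union> {q}" using assms(4) nm by simp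
  have fin: "finite V" using assms(1) unfolding simple_graph_def by simp
  have sym: "\<And>x y. E x y \<Longrightarrow> E y x" and irr: "\<And>x y. E x y \<Longrightarrow> x \<noteq> y"
    and inV: "\<And>x y. E x y \<Longrightarrow> x \<in> V \<and> y \<in> V"
    using assms(1) unfolding simple_graph_def by blast+
  have pe: "\<And>i. 1 \<le> i \<Longrightarrow> i < m \<Longrightarrow> E (p i) (p (Suc i))" using assms(6) nm by simp
  have c1: "card (p ` {1..m}) \<le> m" using card_image_le[of "{1..m}" p] by simp
  have c2: "card V \<le> card (p ` {1..m}) + 1" unfolding V
    using card_Un_le[of "p`{1..m}" "{q}"] by simp
  have cpm: "card (p ` {1..m}) = m" using c1 c2 assms(5) nm by simp
  have inj: "inj_on p {1..m}" using eq_card_imp_inj_on[of "{1..m}" p] cpm by simp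
  have qn: "q \<notin> p ` {1..m}"
  proof
    assume "q \<in> p ` {1..m}"
    then have "V = p ` {1..m}" using V by auto
    then show False using cpm assms(5) nm by simp
  qed
  have pV: "\<And>i. 1 \<le> i \<Longrightarrow> i \<le> m \<Longrightarrow> p i \<in> V" unfolding V by simp
  have pinj: "\<And>i j. 1 \<le> i \<Longrightarrow> i \<le> m \<Longrightarrow> 1 \<le> j \<Longrightarrow> j \<le> m \<Longrightarrow> p i = p j \<longleftrightarrow> i = j"
    using inj_onD[OF inj] by (metis atLeastAtMost_iff)
  define C where "C k = card ` {S. is_kpvc V E k S}" for k
  have Cfin: "finite (C k)" for k
  proof -
    have sub: "{S. is_kpvc V E k S} \<subseteq> Pow V" unfolding is_kpvc_def by auto
    show ?thesis unfolding C_def using finite_imageI[OF finite_subset[OF sub finite_Pow_iff[THEN iffD2, OF fin]]] .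
  qed
  have Vc: "is_kpvc V E k V" if "k \<ge> 1" for k
    using that unfolding is_kpvc_def is_path_def by (auto simp: Suc_le_eq) (metis Int_absorb2 set_empty)
  have noham: False if ch: "chain E xs" and st: "set xs = V" and ln: "length xs = n" for xs
  proof -
    have "C n \<noteq> {}" using Vc[of n] nm unfolding C_def by auto
    then have "0 \<in> C n" using Min_in[OF Cfin] assms(8) unfolding psi_def C_def by metis
    then obtain S where S: "is_kpvc V E n S" "card S = 0" unfolding C_def by auto
    then have "S = {}" using fin unfolding is_kpvc_def by (meson card_0_eq finite_subset)
    moreover have "distinct xs" using st ln assms(5) by (simp add: card_distinct)
    then have "is_path V E n xs" using ch st ln unfolding is_path_def chain_nth by auto
    ultimately show False using S unfolding is_kpvc_def by auto
  qed
  have sing: "\<exists>xs. is_path V E m xs \<and> v \<notin> set xs" if "v \<in> V" for v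
  proof (rule ccontr)
    assume "\<nexists>xs. is_path V E m xs \<and> v \<notin> set xs"
    then have "is_kpvc V E m {v}" using that unfolding is_kpvc_def by auto
    then have "1 \<in> C m" unfolding C_def by force
    then have "Min (C m) \<le> 1" using Cfin Min_le by blast
    then show False using assms(7) nm unfolding psi_def C_def by simp
  qed
  have toV: "set xs = V" if "set xs = p ` A \<union> {q}" "A = {1..m}" for xs A using that V by simp
  have cons: "\<not> (E q (p i) \<and> E q (p (Suc i)))" if "1 \<le> i" "i < m" for i
  proof
    assume h: "E q (p i) \<and> E q (p (Suc i))"
    let ?xs = "map p [1..<Suc i] @ q # map p [Suc i..<Suc m]"
    have "chain E ?xs" using h that
      by (auto simp del: upt_Suc simp: chain_append chain_Cons sym intro!: chain_upt pe)
    moreover have "set ?xs = V"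
      by (rule toV[where A="{1..<Suc i} \<union> {Suc i..<Suc m}"]) (use that in \<open>auto simp del: upt_Suc\<close>)
    moreover have "length ?xs = n" using that nm by simp
    ultimately show False by (rule noham)
  qed
  have deg2: "2 \<le> degree V E v" if vw: "E v w" for v w
  proof -
    have wV: "w \<in> V" and vV: "v \<in> V" using inV[OF vw] by auto
    obtain xs where xs: "is_path V E m xs" "w \<notin> set xs" using sing[OF wV] by blast
    have dxs: "distinct xs" and lxs: "length xs = m" and sxs: "set xs \<subseteq> V"
      and exs: "\<forall>i. Suc i < length xs \<longrightarrow> E (xs ! i) (xs ! Suc i)"
      using xs(1) unfolding is_path_def by auto
    have sub: "set xs \<subseteq> V - {w}" using sxs xs(2) by auto
    have "card (set xs) = card (V - {w})" using dxs lxs wV fin assms(5) nm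
      by (simp add: distinct_card)
    then have "set xs = V - {w}" using sub fin by (simp add: card_subset_eq)
    moreover have "v \<noteq> w" using irr[OF vw] .
    ultimately have "v \<in> set xs" using vV by auto
    then obtain k where k: "k < length xs" "xs ! k = v" by (metis in_set_conv_nth)
    obtain u where u: "u \<in> set xs" "E v u"
    proof (cases "Suc k < length xs")
      case True
      then show ?thesis using that exs k by (metis nth_mem)
    next
      case False
      then have "k > 0" using k lxs m3 by auto
      then have "E (xs ! (k - 1)) v" using exs k by (metis Suc_pred' lessI less_trans)
      then show ?thesis using that k \<open>k > 0\<close> sym by (metis diff_less less_imp_diff_less less_one nth_mem)
    qed
    have "u \<noteq> w" using u xs(2) by auto
    moreover have "{w, u} \<subseteq> {x \<in> V. E v x}" using u vw inV by auto
    moreover have "finite {x \<in> V. E v x}" using fin by simp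
    ultimately have "card {w, u} \<le> card {x \<in> V. E v x}" by (meson card_mono)
    then show ?thesis unfolding degree_def using \<open>u \<noteq> w\<close> by simp
  qed
  have d1: "2 \<le> degree V E (p 1)" using deg2 pe[of 1] m3 by simp
  have d2: "2 \<le> degree V E (p m)" using deg2[of "p m" "p (m - 1)"] pe[of "m - 1"] m3 sym by simp
  obtain i0 where i0: "1 \<le> i0" "i0 \<le> m" "E q (p i0)"
  proof -
    have "(\<lambda>x y. E x y \<and> x \<in> V \<and> y \<in> V)\<^sup>*\<^sup>* q (p 1)"
      using assms(2) pV[of 1] m3 V unfolding connected_graph_def by auto
    then show ?thesis
    proof (cases rule: converse_rtranclpE)
      case base
      then show ?thesis using qn m3 by force
    next
      case (step u)
      then have "E q u" "u \<in> V" by auto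
      then have "u \<in> p ` {1..m}" using irr V by auto
      then show ?thesis using that \<open>E q u\<close> by auto
    qed
  qed
  have n1: "\<not> E (p 1) (p m)"
  proof
    assume h: "E (p 1) (p m)"
    let ?xs = "q # map p [i0..<Suc m] @ map p [1..<i0]"
    have "chain E ?xs" using h i0
      by (auto simp del: upt_Suc simp: chain_append chain_Cons sym intro!: chain_upt pe)
    moreover have "set ?xs = V"
      by (rule toV[where A="{i0..<Suc m} \<union> {1..<i0}"]) (use i0 in \<open>auto simp del: upt_Suc\<close>)
    moreover have "length ?xs = n" using i0 nm by simp
    ultimately show False by (rule noham)
  qed
  have n2: "\<not> E q (p 1)"
  proof
    assume h: "E q (p 1)"
    let ?xs = "q # map p [1..<Suc m]"
    have "chain E ?xs" using h m3
      by (auto simp del: upt_Suc simp: chain_append chain_Cons sym intro!: chain_upt pe)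
    moreover have "set ?xs = V"
      by (rule toV[where A="{1..<Suc m}"]) (auto simp del: upt_Suc)
    moreover have "length ?xs = n" using nm by simp
    ultimately show False by (rule noham)
  qed
  have n3: "\<not> E q (p m)"
  proof
    assume h: "E q (p m)"
    let ?xs = "map p [1..<Suc m] @ [q]"
    have "chain E ?xs" using h m3
      by (auto simp del: upt_Suc simp: chain_append chain_Cons sym intro!: chain_upt pe)
    moreover have "set ?xs = V"
      by (rule toV[where A="{1..<Suc m}"]) (auto simp del: upt_Suc)
    moreover have "length ?xs = n" using nm by simp
    ultimately show False by (rule noham)
  qed
  have mid: "2 \<le> i \<and> i < m" if "1 \<le> i" "i \<le> m" "E q (p i)" for i
  proof -
    have "i \<noteq> 1" using that(3) n2 by auto
    moreover have "i \<noteq> m" using that(3) n3 by auto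
    ultimately show ?thesis using that(1,2) by simp
  qed
  have t3a: "\<not> E (p 1) (p (Suc i))" if i: "1 \<le> i" "i \<le> m" "E q (p i)" for i
  proof
    assume h: "E (p 1) (p (Suc i))"
    have ii: "2 \<le> i" "i < m" using mid[OF i] by auto
    let ?xs = "q # rev (map p [1..<Suc i]) @ map p [Suc i..<Suc m]"
    have "chain E ?xs" using h i ii
      by (auto simp del: upt_Suc simp: chain_append chain_Cons chain_rev sym hd_rev last_rev intro!: chain_upt pe)
    moreover have "set ?xs = V"
      by (rule toV[where A="{1..<Suc i} \<union> {Suc i..<Suc m}"]) (use ii in \<open>auto simp del: upt_Suc\<close>)
    moreover have "length ?xs = n" using ii nm by simp
    ultimately show False by (rule noham)
  qed
  have t3b: "\<not> E (p m) (p (i - 1))" if i: "1 \<le> i" "i \<le> m" "E q (p i)" for i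
  proof
    assume h: "E (p m) (p (i - 1))"
    have ii: "2 \<le> i" "i < m" using mid[OF i] by auto
    let ?xs = "q # map p [i..<Suc m] @ rev (map p [1..<i])"
    have "chain E ?xs" using h i ii
      by (auto simp del: upt_Suc simp: chain_append chain_Cons chain_rev sym hd_rev last_rev intro!: chain_upt pe)
    moreover have "set ?xs = V"
      by (rule toV[where A="{i..<Suc m} \<union> {1..<i}"]) (use ii in \<open>auto simp del: upt_Suc\<close>)
    moreover have "length ?xs = n" using ii nm by simp
    ultimately show False by (rule noham)
  qed
  define M where "M = {j\<in>{1..m}. E q (p j)}"
  have Mfin: "finite M" unfolding M_def by simp
  have t4a: "\<not> E (p 1) (p (i - 1))" if i: "1 \<le> i" "i \<le> m" "E q (p i)" "i > Min M" for i
  proof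
    assume h: "E (p 1) (p (i - 1))"
    define j where "j = Min M"
    have "M \<noteq> {}" using i unfolding M_def by auto
    then have "j \<in> M" unfolding j_def using Mfin Min_in by blast
    then have j: "1 \<le> j" "j \<le> m" "E q (p j)" unfolding M_def by auto
    have "j < i" using i j_def by simp
    moreover have "Suc j \<noteq> i" using cons[of j] j i \<open>j < i\<close> by auto
    ultimately have ji: "Suc j < i" by simp
    let ?xs = "rev (map p [i..<Suc m]) @ q # rev (map p [1..<Suc j]) @ rev (map p [Suc j..<i])"
    have "chain E ?xs" using h i j ji
      by (auto simp del: upt_Suc simp: chain_append chain_Cons chain_rev sym hd_rev last_rev intro!: chain_upt pe)
    moreover have "set ?xs = V"
      by (rule toV[where A="{i..<Suc m} \<union> {1..<Suc j} \<union> {Suc j..<i}"]) (use i j ji in \<open>auto simp del: upt_Suc\<close>)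
    moreover have "length ?xs = n" using i j ji nm by simp
    ultimately show False by (rule noham)
  qed
  have t4b: "\<not> E (p m) (p (Suc i))" if i: "1 \<le> i" "i \<le> m" "E q (p i)" "i < Max M" for i
  proof
    assume h: "E (p m) (p (Suc i))"
    define j where "j = Max M"
    have "M \<noteq> {}" using i unfolding M_def by auto
    then have "j \<in> M" unfolding j_def using Mfin Max_in by blast
    then have j: "1 \<le> j" "j \<le> m" "E q (p j)" unfolding M_def by auto
    have "i < j" using i j_def by simp
    moreover have "Suc i \<noteq> j" using cons[of i] j i \<open>i < j\<close> by auto
    ultimately have ji: "Suc i < j" by simp
    let ?xs = "map p [1..<Suc i] @ q # map p [j..<Suc m] @ map p [Suc i..<j]"
    have "chain E ?xs" using h i j ji
      by (auto simp del: upt_Suc simp: chain_append chain_Cons sym intro!: chain_upt pe)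
    moreover have "set ?xs = V"
      by (rule toV[where A="{1..<Suc i} \<union> {j..<Suc m} \<union> {Suc i..<j}"]) (use i j ji in \<open>auto simp del: upt_Suc\<close>)
    moreover have "length ?xs = n" using i j ji nm by simp
    ultimately show False by (rule noham)
  qed
  have cons2: "\<forall>i\<in>{2..m-1}. E q (p i) \<longrightarrow> \<not> E q (p (i+1))"
    using cons by auto
  have e1: "n - 1 = m" and e2: "n - 2 = m - 1" using nm by auto
  have Meq: "{j\<in>{1..n-1}. E q (p j)} = M" unfolding M_def e1 ..
  have A: "\<forall>i\<in>{1..m}. E q (p i) \<longrightarrow> \<not> E (p 1) (p (i + 1)) \<and> \<not> E (p m) (p (i - 1))"
    using t3a t3b by simp
  have B: "\<forall>i\<in>{1..m}. E q (p i) \<and> Min M < i \<longrightarrow> \<not> E (p 1) (p (i - 1))"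
    using t4a by simp
  have C: "\<forall>i\<in>{1..m}. E q (p i) \<and> i < Max M \<longrightarrow> \<not> E (p m) (p (i + 1))"
    using t4b by simp
  show ?thesis
    unfolding e1 e2 using A B C d1 d2 n1 n2 n3 cons2 unfolding M_def by blast
qed
end
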